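(* Let $X=\mathbb{R}$, let $\beta,K,\nu,\gamma,\eta,\xi,\zeta>0$ with $\gamma>\eta$, and define $$a(x):=\gamma-\eta x^2,\qquad b(x):=\xi+\zeta(1-x)^2 .$$ Assume $\gamma>(\eta\beta)^{1/2}$ and $\mathcal{R}_0>1$, where $$\mathcal{R}_0:=\frac{K}{\nu}\Big(\gamma-(\eta\beta)^{1/2}\Big)\Big(\xi+\zeta+\zeta\Big(\frac{\beta}{\eta}\Big)^{1/2}\Big).$$ Then the unique solution $(\overline{s}_E,\overline{I}_E)$ of the problem $$\beta\,\overline{s}_E''+\Big[a(x)-\Big(b(x)+\frac1K\Big)\overline{I}_E-\frac{\overline{S}_E}{K}\Big]\overline{s}_E=0\ \ (x\in\mathbb{R}),\qquad \Big(\int_{\mathbb{R}} b(x)\overline{s}_E(x)\,dx-\nu\Big)\overline{I}_E=0,$$ $$\overline{S}_E:=\int_{\mathbb{R}}\overline{s}_E\,dx,\qquad \overline{s}_E(\cdot)>0,\quad 0<\overline{S}_E<\infty,\quad 0<\overline{I}_E<\infty,$$ is given by $$\overline{s}_E(x)=\overline{S}_E\Big(\frac{1}{2\pi\overline{\sigma}_E^2}\Big)^{1/2}\exp\Big[-\frac{(x-\overline{\mu}_E)^2}{2\overline{\sigma}_E^2}\Big],\qquad \overline{\sigma}_E^2=\Big(\frac{\beta}{\eta+\zeta\overline{I}_E}\Big)^{1/2},\quad \overline{\mu}_E=\frac{\zeta\overline{I}_E}{\eta+\zeta\overline{I}_E},$$ $$\overline{S}_E=K\Big(\gamma-\Big(\frac1K+\frac{\eta\zeta}{\eta+\zeta\overline{I}_E}+\xi\Big)\overline{I}_E-\beta^{1/2}(\eta+\zeta\overline{I}_E)^{1/2}\Big)>0,$$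 where $\overline{I}_E$ is the unique positive solution of the algebraic equation $$(1+\xi K)\,\overline{I}_E=K\Big(\gamma-\eta\frac{\zeta\overline{I}_E}{\eta+\zeta\overline{I}_E}-\beta^{1/2}(\eta+\zeta\overline{I}_E)^{1/2}\Big)-F(\overline{I}_E),$$ $$F(y):=\nu\Big(\xi+\zeta\Big(\frac{\zeta y}{\eta+\zeta y}-1\Big)^2+\zeta\Big(\frac{\beta}{\eta+\zeta y}\Big)^{1/2}\Big)^{-1}.$$
   Context: This is the steady-state (endemic equilibrium) problem of the SI model $\partial_t s=(a(x)-N/K)s-b(x)Is+\beta\partial_x^2 s$, $I'=(\int b s\,dx-\nu)I$, $N=\int s\,dx+I$. The quantity $\mathcal{R}_0$ defined in the claim is the basic reproduction number for these choices of $a$ and $b$. *)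

theory Defs
  imports "HOL-Analysis.Analysis"
begin

definition a_fun :: "real \<Rightarrow> real \<Rightarrow> real \<Rightarrow> real" where
  "a_fun \<gamma> \<eta> x = \<gamma> - \<eta> * x\<^sup>2"

definition b_fun :: "real \<Rightarrow> real \<Rightarrow> real \<Rightarrow> real" where
  "b_fun \<xi> \<zeta> x = \<xi> + \<zeta> * (1 - x)\<^sup>2"

definition steady_state ::
  "real \<Rightarrow> real \<Rightarrow> real \<Rightarrow> real \<Rightarrow> real \<Rightarrow> real \<Rightarrow> real
   \<Rightarrow> (real \<Rightarrow> real) \<Rightarrow> real \<Rightarrow> bool" where
  "steady_state \<beta> K \<nu> \<gamma> \<eta> \<xi> \<zeta> s I \<longleftrightarrow>
     (\<exists>s' s''. \<forall>x. (s has_real_derivative s' x) (at x) \<and>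
                    (s' has_real_derivative s'' x) (at x) \<and>
        \<beta> * s'' x + (a_fun \<gamma> \<eta> x - (b_fun \<xi> \<zeta> x + 1 / K) * I
                     - integral UNIV s / K) * s x = 0)
     \<and> s integrable_on UNIV
     \<and> (\<lambda>x. b_fun \<xi> \<zeta> x * s x) integrable_on UNIV
     \<and> (integral UNIV (\<lambda>x. b_fun \<xi> \<zeta> x * s x) - \<nu>) * I = 0
     \<and> (\<forall>x. s x > 0)
     \<and> integral UNIV s > 0
     \<and> I > 0"

definition F_fun :: "real \<Rightarrow> real \<Rightarrow> real \<Rightarrow> real \<Rightarrow> real \<Rightarrow> real \<Rightarrow> real" where
  "F_fun \<beta> \<nu> \<eta> \<xi> \<zeta> y =
     \<nu> / (\<xi> + \<zeta> * (\<zeta> * y / (\<eta> + \<zeta> * y) - 1)\<^sup>2 + \<zeta> * sqrt (\<beta> / (\<eta> + \<zeta> * y)))"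

definition R0 :: "real \<Rightarrow> real \<Rightarrow> real \<Rightarrow> real \<Rightarrow> real \<Rightarrow> real \<Rightarrow> real \<Rightarrow> real" where
  "R0 \<beta> K \<nu> \<gamma> \<eta> \<xi> \<zeta> =
     K / \<nu> * (\<gamma> - sqrt (\<eta> * \<beta>)) * (\<xi> + \<zeta> + \<zeta> * sqrt (\<beta> / \<eta>))"

end

theory Submission
  imports Defs "HOL-Probability.Probability" "HOL-Real_Asymp.Real_Asymp"
begin

lemma nd_eq:
  assumes "w > 0"
  shows "exp (-((x-m)\<^sup>2)/(2*w)) = sqrt (2*pi*w) * normal_density m (sqrt w) x"
  using assms by (simp add: normal_density_def)

lemma alg1: "(q::real) * (xi * n + ze * (n * (x - m)^2 + 2*(m-1) * (n * (x - m)) + (1-m)\<^sup>2 * n))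
      = (xi + ze * (1 - x)\<^sup>2) * (q * n)"
  by (simp add: algebra_simps power2_eq_square)

lemma gauss_int:
  assumes "w > 0"
  shows "((\<lambda>x. exp (-((x-m)\<^sup>2)/(2*w))) has_integral sqrt (2*pi*w)) UNIV"
proof -
  have "(normal_density m (sqrt w) has_integral 1) UNIV"
    using has_integral_integral_lborel[OF integrable_normal_density[of "sqrt w" m]] assms by simp
  from has_integral_mult_right[OF this, of "sqrt (2*pi*w)"]
  show ?thesis using nd_eq[OF assms] by simp
qed


lemma gauss_int_b:
  assumes "w > 0"
  shows "((\<lambda>x. (xi + ze * (1 - x)\<^sup>2) * exp (-((x-m)\<^sup>2)/(2*w))) has_integral
          sqrt (2*pi*w) * (xi + ze * ((1-m)\<^sup>2 + w))) UNIV"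
proof -
  let ?n = "normal_density m (sqrt w)"
  have s: "sqrt w > 0" using assms by simp
  have h0: "(?n has_integral 1) UNIV"
    using has_integral_integral_lborel[OF integrable_normal_density[of "sqrt w" m]] assms by simp
  have h2: "((\<lambda>x. ?n x * (x - m)^2) has_integral w) UNIV"
  proof -
    have "has_bochner_integral lborel (\<lambda>x. ?n x * (x - m) ^ (2 * 1)) (fact (2 * 1) / ((2 / (sqrt w)\<^sup>2)^1 * fact 1))"
      by (rule normal_moment_even[OF s])
    then have hb: "has_bochner_integral lborel (\<lambda>x. ?n x * (x - m) ^ 2) w"
      using assms by (simp add: fact_numeral)
    show ?thesis
      using has_integral_integral_lborel[OF integrable.intros[OF hb]] has_bochner_integral_integral_eq[OF hb] by simp
  qed
  have h1: "((\<lambda>x. ?n x * (x - m)) has_integral 0) UNIV"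
  proof -
    have "has_bochner_integral lborel (\<lambda>x. ?n x * (x - m) ^ (2 * 0 + 1)) 0"
      by (rule normal_moment_odd[OF s])
    then have hb: "has_bochner_integral lborel (\<lambda>x. ?n x * (x - m)) 0" by simp
    show ?thesis
      using has_integral_integral_lborel[OF integrable.intros[OF hb]] has_bochner_integral_integral_eq[OF hb] by simp
  qed
  have "((\<lambda>x. sqrt (2*pi*w) * (xi * ?n x + ze * (?n x * (x - m)^2 + 2*(m-1) * (?n x * (x - m)) + (1-m)\<^sup>2 * ?n x)))
        has_integral sqrt (2*pi*w) * (xi * 1 + ze * (w + 2*(m-1) * 0 + (1-m)\<^sup>2 * 1))) UNIV"
    by (intro has_integral_mult_right has_integral_add h0 h1 h2)
  also have "(\<lambda>x. sqrt (2*pi*w) * (xi * ?n x + ze * (?n x * (x - m)^2 + 2*(m-1) * (?n x * (x - m)) + (1-m)\<^sup>2 * ?n x)))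
      = (\<lambda>x. (xi + ze * (1 - x)\<^sup>2) * exp (-((x-m)\<^sup>2)/(2*w)))"
    unfolding alg1 nd_eq[OF assms] ..
  also have "sqrt (2*pi*w) * (xi * 1 + ze * (w + 2*(m-1) * 0 + (1-m)\<^sup>2 * 1)) = sqrt (2*pi*w) * (xi + ze * ((1-m)\<^sup>2 + w))"
    by simp
  finally show ?thesis .
qed

lemma gauss_d1:
  assumes "w \<noteq> 0"
  shows "((\<lambda>x. exp (-((x-m)\<^sup>2)/(2*w))) has_real_derivative (-(x-m)/w * exp (-((x-m)\<^sup>2)/(2*w)))) (at x)"
  using assms by (auto intro!: derivative_eq_intros simp: field_simps power2_eq_square)

lemma gauss_d2:
  assumes "w \<noteq> 0"
  shows "((\<lambda>x. -(x-m)/w * exp (-((x-m)\<^sup>2)/(2*w))) has_real_derivative (((x-m)\<^sup>2/w\<^sup>2 - 1/w) * exp (-((x-m)\<^sup>2)/(2*w)))) (at x)"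
proof -
  have a: "((\<lambda>x. -(x-m)/w) has_real_derivative (-1/w)) (at x)"
    using assms by (auto intro!: derivative_eq_intros)
  have "((\<lambda>x. -(x-m)/w * exp (-((x-m)\<^sup>2)/(2*w))) has_real_derivative
      ((-1/w) * exp (-((x-m)\<^sup>2)/(2*w)) + (-(x-m)/w) * (-(x-m)/w * exp (-((x-m)\<^sup>2)/(2*w))))) (at x)"
    using DERIV_mult[OF a gauss_d1[OF assms]] by (simp add: algebra_simps)
  moreover have "(-1/w) * exp (-((x-m)\<^sup>2)/(2*w)) + (-(x-m)/w) * (-(x-m)/w * exp (-((x-m)\<^sup>2)/(2*w)))
     = ((x-m)\<^sup>2/w\<^sup>2 - 1/w) * exp (-((x-m)\<^sup>2)/(2*w))"
    using assms by (simp add: field_simps power2_eq_square)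
  ultimately show ?thesis by simp
qed

lemma convex_tail:
  fixes f f' f'' :: "real \<Rightarrow> real"
  assumes d1: "\<And>x. (f has_real_derivative f' x) (at x)"
    and d2: "\<And>x. (f' has_real_derivative f'' x) (at x)"
    and conv: "\<And>x. x \<ge> R \<Longrightarrow> f'' x \<ge> 0"
    and pos: "\<And>x. f x > 0"
    and intb: "\<And>a b. integral {a..b} f \<le> M"
  shows "\<forall>x\<ge>R. \<bar>f x\<bar> \<le> \<bar>f R\<bar> + \<bar>f' R\<bar> \<and> \<bar>f' x\<bar> \<le> \<bar>f R\<bar> + \<bar>f' R\<bar>"
proof -
  have mono': "f' x \<le> f' y" if "R \<le> x" "x \<le> y" for x y
  proof (rule DERIV_nonneg_imp_nondecreasing[of x y f'])
    fix z assume "x \<le> z" "z \<le> y"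
    then show "\<exists>d. DERIV f' z :> d \<and> d \<ge> 0" using d2[of z] conv[of z] that by auto
  qed (use that in auto)
  have contf: "continuous_on S f" for S
    by (meson DERIV_isCont continuous_at_imp_continuous_on d1)
  have nonpos: "f' x \<le> 0" if x: "R \<le> x" for x
  proof (rule ccontr)
    assume "\<not> f' x \<le> 0"
    hence p: "f' x > 0" by simp
    have incr: "f x \<le> f y" if "x \<le> y" for y
    proof (rule DERIV_nonneg_imp_nondecreasing[of x y f])
      fix z assume "x \<le> z" "z \<le> y"
      then show "\<exists>d. DERIV f z :> d \<and> d \<ge> 0" using d1[of z] mono'[of x z] x p by auto
    qed (use that in auto)
    define n where "n = \<bar>M\<bar> / f x + 1"
    have fx: "f x > 0" by (rule pos)
    have n: "n > 0" unfolding n_def using fx by (simp add: add_nonneg_pos)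
    have "integral {x..x+n} (\<lambda>_. f x) \<le> integral {x..x+n} f"
      by (intro integral_le integrable_continuous_interval contf continuous_on_const) (auto intro: incr)
    also have "\<dots> \<le> M" by (rule intb)
    finally have "n * f x \<le> M" using n by simp
    moreover have "n * f x = \<bar>M\<bar> + f x" unfolding n_def using fx by (simp add: field_simps)
    ultimately show False using fx by linarith
  qed
  show ?thesis
  proof (intro allI impI conjI)
    fix x assume x: "R \<le> x"
    have "f x \<le> f R"
    proof (rule DERIV_nonpos_imp_nonincreasing[of R x f])
      fix z assume "R \<le> z" "z \<le> x"
      then show "\<exists>d. DERIV f z :> d \<and> d \<le> 0" using d1[of z] nonpos[of z] by auto
    qed (use x in auto)
    then show "\<bar>f x\<bar> \<le> \<bar>f R\<bar> + \<bar>f' R\<bar>" using pos[of x] by auto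
    have "f' R \<le> f' x" using mono' x by simp
    then show "\<bar>f' x\<bar> \<le> \<bar>f R\<bar> + \<bar>f' R\<bar>" using nonpos[OF x] by auto
  qed
qed


lemma mono_lim_contra:
  fixes W d :: "real \<Rightarrow> real"
  assumes Wd: "\<And>x. (W has_real_derivative d x) (at x)"
    and dpos: "\<And>x. d x > 0"
    and top: "(W \<longlongrightarrow> 0) at_top" and bot: "(W \<longlongrightarrow> 0) at_bot"
  shows False
proof -
  have lt: "W (-1) < W 0"
    by (rule DERIV_pos_imp_increasing[of "-1" 0 W]) (use Wd dpos in auto)
  have "W 0 \<le> 0"
  proof (rule tendsto_lowerbound[OF top])
    show "\<forall>\<^sub>F i in at_top. W 0 \<le> W i"
      unfolding eventually_at_top_linorder
    proof (intro exI allI impI)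
      fix x :: real assume "x \<ge> 0"
      then show "W 0 \<le> W x"
        by (intro DERIV_nonneg_imp_nondecreasing[of 0 x W]) (use Wd dpos less_imp_le in blast)+
    qed
  qed simp
  moreover have "0 \<le> W (-1)"
  proof (rule tendsto_upperbound[OF bot])
    show "\<forall>\<^sub>F i in at_bot. W (-1) \<ge> W i"
      unfolding eventually_at_bot_linorder
    proof (intro exI allI impI)
      fix x :: real assume "x \<le> -1"
      then show "W (-1) \<ge> W x"
        by (intro DERIV_nonneg_imp_nondecreasing[of x "-1" W]) (use Wd dpos less_imp_le in blast)+
    qed
  qed simp
  ultimately show False using lt by linarith
qed

lemma ground_state:
  fixes s s' s'' :: "real \<Rightarrow> real"
  assumes \<beta>: "\<beta> > 0" and w: "w > 0"
    and d1: "\<And>x. (s has_real_derivative s' x) (at x)"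
    and d2: "\<And>x. (s' has_real_derivative s'' x) (at x)"
    and ode: "\<And>x. \<beta> * s'' x = (\<beta> / w\<^sup>2 * (x-m)\<^sup>2 - c) * s x"
    and pos: "\<And>x. s x > 0"
    and intb: "\<And>a b. integral {a..b} s \<le> M"
  shows "c = \<beta> / w \<and> (\<forall>x. s x = s m * exp (-((x-m)\<^sup>2)/(2*w)))"
proof -
  define g where "g = (\<lambda>x. exp (-((x-m)\<^sup>2)/(2*w)))"
  define g' where "g' = (\<lambda>x. -(x-m)/w * exp (-((x-m)\<^sup>2)/(2*w)))"
  have gd1: "(g has_real_derivative g' x) (at x)" for x
    unfolding g_def g'_def using gauss_d1[of w m x] w by simp
  have gd2: "(g' has_real_derivative ((x-m)\<^sup>2/w\<^sup>2 - 1/w) * g x) (at x)" for x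
    unfolding g_def g'_def using gauss_d2[of w m x] w by simp
  have gpos: "g x > 0" for x unfolding g_def by simp
  define W where "W = (\<lambda>x. s' x * g x - s x * g' x)"
  define k where "k = 1/w - c/\<beta>"
  have Wd: "(W has_real_derivative k * s x * g x) (at x)" for x
  proof -
    have "(W has_real_derivative (s'' x * g x + g' x * s' x - (s' x * g' x + ((x-m)\<^sup>2/w\<^sup>2 - 1/w) * g x * s x))) (at x)"
      unfolding W_def by (rule DERIV_diff[OF DERIV_mult[OF d2 gd1] DERIV_mult[OF d1 gd2]])
    moreover have "s'' x = ((x-m)\<^sup>2/w\<^sup>2 - c/\<beta>) * s x"
      using ode[of x] \<beta> by (simp add: field_simps)
    ultimately show ?thesis
      unfolding k_def by (simp add: algebra_simps)
  qed
  define t where "t = \<bar>c\<bar> * w\<^sup>2 / \<beta>"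
  have t0: "t \<ge> 0" unfolding t_def using \<beta> by simp
  have bigq: "c \<le> \<beta> / w\<^sup>2 * y\<^sup>2" if "y \<ge> t + 1" for y
  proof -
    have "y \<ge> 1" using that t0 by linarith
    then have "y\<^sup>2 \<ge> y" by (simp add: power2_eq_square)
    then have "y\<^sup>2 \<ge> t" using that by linarith
    then have "\<beta> / w\<^sup>2 * y\<^sup>2 \<ge> \<beta> / w\<^sup>2 * t" using \<beta> w by (intro mult_left_mono) auto
    moreover have "\<beta> / w\<^sup>2 * t = \<bar>c\<bar>" unfolding t_def using \<beta> w by (simp add: field_simps)
    ultimately show ?thesis by linarith
  qed
  have s2nn: "s'' x \<ge> 0" if "c \<le> \<beta> / w\<^sup>2 * (x-m)\<^sup>2" for x
  proof -
    have "\<beta> * s'' x \<ge> 0" unfolding ode using that pos[of x] by simp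
    then show ?thesis using \<beta> by (simp add: zero_le_mult_iff)
  qed
  have intU: "\<And>a b. integral {a..b} s \<le> M" by (rule intb)
  have "\<forall>x\<ge>m+t+1. \<bar>s x\<bar> \<le> \<bar>s (m+t+1)\<bar> + \<bar>s' (m+t+1)\<bar> \<and> \<bar>s' x\<bar> \<le> \<bar>s (m+t+1)\<bar> + \<bar>s' (m+t+1)\<bar>"
  proof (rule convex_tail[OF d1 d2 _ pos intb])
    fix x assume "m + t + 1 \<le> x"
    then show "0 \<le> s'' x" using bigq[of "x-m"] s2nn by simp
  qed
  then obtain B1 where B1: "\<And>x. x \<ge> m+t+1 \<Longrightarrow> \<bar>s x\<bar> \<le> B1 \<and> \<bar>s' x\<bar> \<le> B1" by blast
  have hd1: "((\<lambda>x. s (-x)) has_real_derivative - s' (-x)) (at x)" for x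
    using DERIV_mirror[where f=s and x=x and y="s' (-x)"] d1[of "-x"] by simp
  have hd2: "((\<lambda>x. - s' (-x)) has_real_derivative s'' (-x)) (at x)" for x
    using DERIV_minus[OF iffD1[OF DERIV_mirror[where f=s' and x=x and y="s'' (-x)"]]] d2[of "-x"] by simp
  have hint: "integral {a..b} (\<lambda>x. s (-x)) \<le> M" for a b
    using Henstock_Kurzweil_Integration.integral_reflect_real[of "-a" "-b" s] intb[of "-b" "-a"] by simp
  have "\<forall>x\<ge>t+1-m. \<bar>s (-x)\<bar> \<le> \<bar>s (-(t+1-m))\<bar> + \<bar>- s' (-(t+1-m))\<bar> \<and> \<bar>- s' (-x)\<bar> \<le> \<bar>s (-(t+1-m))\<bar> + \<bar>- s' (-(t+1-m))\<bar>"
  proof (rule convex_tail[where f="\<lambda>x. s (-x)", OF hd1 hd2 _ _ hint])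
    fix x assume "t + 1 - m \<le> x"
    then have "c \<le> \<beta> / w\<^sup>2 * (-x-m)\<^sup>2" using bigq[of "x+m"] by (simp add: power2_commute algebra_simps)
    then show "0 \<le> s'' (-x)" using s2nn by simp
  qed (rule pos)
  note tailL = this
  define B2 where "B2 = \<bar>s (-(t+1-m))\<bar> + \<bar>- s' (-(t+1-m))\<bar>"
  have B2: "\<bar>s x\<bar> \<le> B2 \<and> \<bar>s' x\<bar> \<le> B2" if "x \<le> m-t-1" for x
    using tailL[rule_format, of "-x"] that unfolding B2_def by simp
  have Wbound: "\<bar>W x\<bar> \<le> B * (exp (-((x-m)\<^sup>2)/(2*w)) + \<bar>x-m\<bar>/w * exp (-((x-m)\<^sup>2)/(2*w)))"
    if "\<bar>s x\<bar> \<le> B" "\<bar>s' x\<bar> \<le> B" for x B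
  proof -
    have "\<bar>W x\<bar> \<le> \<bar>s' x\<bar> * g x + \<bar>s x\<bar> * \<bar>g' x\<bar>"
      unfolding W_def using abs_triangle_ineq4[of "s' x * g x" "s x * g' x"] gpos[of x] by (simp add: abs_mult)
    also have "\<dots> \<le> B * g x + B * \<bar>g' x\<bar>"
      using that gpos[of x] by (intro add_mono mult_right_mono) auto
    also have "\<bar>g' x\<bar> = \<bar>x-m\<bar>/w * g x" unfolding g'_def g_def using w by (simp add: abs_mult)
    finally show ?thesis unfolding g_def by (simp add: algebra_simps)
  qed
  have Wtop: "(W \<longlongrightarrow> 0) at_top"
  proof (rule Lim_null_comparison)
    show "\<forall>\<^sub>F x in at_top. norm (W x) \<le> B1 * (exp (-((x-m)\<^sup>2)/(2*w)) + \<bar>x-m\<bar>/w * exp (-((x-m)\<^sup>2)/(2*w)))"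
      unfolding eventually_at_top_linorder
    proof (intro exI[of _ "m+t+1"] allI impI)
      fix x assume "x \<ge> m+t+1"
      then show "norm (W x) \<le> B1 * (exp (-((x-m)\<^sup>2)/(2*w)) + \<bar>x-m\<bar>/w * exp (-((x-m)\<^sup>2)/(2*w)))"
        using Wbound[of x B1] B1[of x] by simp
    qed
    show "((\<lambda>x. B1 * (exp (-((x-m)\<^sup>2)/(2*w)) + \<bar>x-m\<bar>/w * exp (-((x-m)\<^sup>2)/(2*w)))) \<longlongrightarrow> 0) at_top"
      using w by real_asymp
  qed
  have Wbot: "(W \<longlongrightarrow> 0) at_bot"
  proof (rule Lim_null_comparison)
    show "\<forall>\<^sub>F x in at_bot. norm (W x) \<le> B2 * (exp (-((x-m)\<^sup>2)/(2*w)) + \<bar>x-m\<bar>/w * exp (-((x-m)\<^sup>2)/(2*w)))"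
      unfolding eventually_at_bot_linorder
    proof (intro exI[of _ "m-t-1"] allI impI)
      fix x assume "x \<le> m-t-1"
      then show "norm (W x) \<le> B2 * (exp (-((x-m)\<^sup>2)/(2*w)) + \<bar>x-m\<bar>/w * exp (-((x-m)\<^sup>2)/(2*w)))"
        using Wbound[of x B2] B2[of x] by simp
    qed
    show "((\<lambda>x. B2 * (exp (-((x-m)\<^sup>2)/(2*w)) + \<bar>x-m\<bar>/w * exp (-((x-m)\<^sup>2)/(2*w)))) \<longlongrightarrow> 0) at_bot"
      using w by real_asymp
  qed
  have k0: "k = 0"
  proof (rule ccontr)
    assume "k \<noteq> 0"
    then consider "k > 0" | "k < 0" by linarith
    then show False
    proof cases
      case 1
      show False
        by (rule mono_lim_contra[OF Wd _ Wtop Wbot]) (use 1 pos gpos in simp)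
    next
      case 2
      have a: "((\<lambda>x. - W x) has_real_derivative - (k * s x * g x)) (at x)" for x
        by (rule DERIV_minus[OF Wd])
      have b: "((\<lambda>x. - W x) \<longlongrightarrow> 0) at_top" using tendsto_minus[OF Wtop] by simp
      have c: "((\<lambda>x. - W x) \<longlongrightarrow> 0) at_bot" using tendsto_minus[OF Wbot] by simp
      show False
        by (rule mono_lim_contra[where W="\<lambda>x. - W x" and d="\<lambda>x. - (k * s x * g x)", OF a _ b c])
          (use 2 pos gpos in \<open>simp add: mult_neg_pos\<close>)
    qed
  qed
  have c: "c = \<beta> / w" using k0 \<beta> w unfolding k_def by (simp add: field_simps)
  have Wc: "W x = W 0" for x
    by (rule DERIV_isconst_all) (use Wd k0 in simp)
  have le1: "W 0 \<le> W i" for i using Wc[of i] by linarith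
  have le2: "W 0 \<ge> W i" for i using Wc[of i] by linarith
  have ev1: "\<forall>\<^sub>F i in at_top. W 0 \<le> W i" by (intro always_eventually allI le1)
  have ev2: "\<forall>\<^sub>F i in at_top. W 0 \<ge> W i" by (intro always_eventually allI le2)
  have "W 0 \<le> 0" using tendsto_lowerbound[OF Wtop ev1] by simp
  moreover have "W 0 \<ge> 0" using tendsto_upperbound[OF Wtop ev2] by simp
  ultimately have W00: "W 0 = 0" by linarith
  have W0: "W x = 0" for x using Wc[of x] W00 by linarith
  define u where "u = (\<lambda>x. s x / g x)"
  have ud: "(u has_real_derivative 0) (at x)" for x
  proof -
    have gx: "g x \<noteq> 0" using gpos[of x] by linarith
    have "(u has_real_derivative (s' x * g x - s x * g' x) / (g x * g x)) (at x)"
      unfolding u_def by (rule DERIV_divide[OF d1 gd1 gx])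
    moreover have "s' x * g x - s x * g' x = 0" using W0[of x] unfolding W_def by simp
    ultimately show ?thesis by simp
  qed
  have sform: "s x = s m * exp (-((x-m)\<^sup>2)/(2*w))" for x
  proof -
    have "u x = u m" by (rule DERIV_isconst_all) (use ud in blast)
    moreover have "g m = 1" unfolding g_def by simp
    ultimately have "s x / g x = s m" unfolding u_def by simp
    then have "s x = s m * g x" using gpos[of x] by (simp add: divide_eq_eq)
    then show ?thesis unfolding g_def by simp
  qed
  show ?thesis using c sform by blast
qed


lemma alg_id:
  fixes A \<eta> \<zeta> I K \<gamma> \<xi> T x :: real
  assumes "A = \<eta> + \<zeta>*I" "A \<noteq> 0"
  shows "\<gamma> - \<eta>*x\<^sup>2 - ((\<xi> + \<zeta>*(1-x)\<^sup>2) + 1/K)*I - T = (\<gamma> - \<xi>*I - I/K - T - \<eta>*\<zeta>*I/A) - A*(x - \<zeta>*I/A)\<^sup>2"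
proof -
  have "A*(x - \<zeta>*I/A)\<^sup>2 = A*x\<^sup>2 - 2*\<zeta>*I*x + (\<zeta>*I)\<^sup>2/A"
    using assms(2) by (simp add: power2_eq_square field_simps)
  moreover have "(\<zeta>*I)\<^sup>2/A = \<zeta>*I - \<eta>*\<zeta>*I/A"
    using assms by (simp add: power2_eq_square field_simps)
  ultimately show ?thesis using assms(1) by (simp add: power2_eq_square algebra_simps)
qed

lemma sqrt_div_id:
  assumes "\<beta> > 0" "A > 0"
  shows "\<beta> / sqrt (\<beta> / A) = sqrt \<beta> * sqrt A"
proof -
  have "sqrt (\<beta> / A) = sqrt \<beta> / sqrt A" by (simp add: real_sqrt_divide)
  moreover have "\<beta> = sqrt \<beta> * sqrt \<beta>" using assms by simp
  ultimately show ?thesis using assms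
    by (metis (no_types, opaque_lifting) divide_divide_eq_right nonzero_mult_div_cancel_left real_sqrt_gt_0_iff less_irrefl mult.commute)
qed

lemma forward:
  fixes \<beta> K \<nu> \<gamma> \<eta> \<xi> \<zeta> I :: real and s :: "real \<Rightarrow> real"
  assumes pos: "\<beta> > 0" "K > 0" "\<nu> > 0" "\<eta> > 0" "\<xi> > 0" "\<zeta> > 0"
    and ss: "steady_state \<beta> K \<nu> \<gamma> \<eta> \<xi> \<zeta> s I"
  shows "I > 0 \<and> (1 + \<xi> * K) * I = K * (\<gamma> - \<eta> * (\<zeta> * I / (\<eta> + \<zeta> * I))
                                - sqrt \<beta> * sqrt (\<eta> + \<zeta> * I)) - F_fun \<beta> \<nu> \<eta> \<xi> \<zeta> I
     \<and> s = (\<lambda>x. K * (\<gamma> - (1 / K + \<eta> * \<zeta> / (\<eta> + \<zeta> * I) + \<xi>) * I - sqrt \<beta> * sqrt (\<eta> + \<zeta> * I))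
               * sqrt (1 / (2 * pi * sqrt (\<beta> / (\<eta> + \<zeta> * I))))
               * exp (- (x - \<zeta> * I / (\<eta> + \<zeta> * I))\<^sup>2 / (2 * sqrt (\<beta> / (\<eta> + \<zeta> * I)))))"
proof -
  from ss obtain s' s'' where
      d1: "\<And>x. (s has_real_derivative s' x) (at x)"
    and d2: "\<And>x. (s' has_real_derivative s'' x) (at x)"
    and ode0: "\<And>x. \<beta> * s'' x + (a_fun \<gamma> \<eta> x - (b_fun \<xi> \<zeta> x + 1 / K) * I - integral UNIV s / K) * s x = 0"
    and sint: "s integrable_on UNIV"
    and bint: "(\<lambda>x. b_fun \<xi> \<zeta> x * s x) integrable_on UNIV"
    and nu: "(integral UNIV (\<lambda>x. b_fun \<xi> \<zeta> x * s x) - \<nu>) * I = 0"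
    and spos: "\<And>x. s x > 0" and Spos: "integral UNIV s > 0" and Ipos: "I > 0"
    unfolding steady_state_def by blast
  define S where "S = integral UNIV s"
  define A where "A = \<eta> + \<zeta> * I"
  define \<mu> where "\<mu> = \<zeta> * I / A"
  define w where "w = sqrt (\<beta> / A)"
  define c where "c = \<gamma> - \<xi>*I - I/K - S/K - \<eta>*\<zeta>*I/A"
  have A: "A > 0" unfolding A_def using pos Ipos by (simp add: add_pos_pos)
  have w: "w > 0" unfolding w_def using pos A by simp
  have w2: "\<beta> / w\<^sup>2 = A" unfolding w_def using pos A by simp
  have ode: "\<beta> * s'' x = (\<beta> / w\<^sup>2 * (x-\<mu>)\<^sup>2 - c) * s x" for x
  proof -
    let ?X = "a_fun \<gamma> \<eta> x - (b_fun \<xi> \<zeta> x + 1 / K) * I - S / K"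
    have e1: "\<beta> * s'' x = - (?X * s x)" using ode0[of x] unfolding S_def by linarith
    have e2: "?X = c - A * (x - \<mu>)\<^sup>2"
      unfolding a_fun_def b_fun_def c_def \<mu>_def
      by (rule alg_id) (use A A_def in auto)
    from e1 have "\<beta> * s'' x = - ((c - A * (x - \<mu>)\<^sup>2) * s x)" by (simp only: e2)
    then show ?thesis unfolding w2 by (simp add: algebra_simps)
  qed
  have contS: "continuous_on T s" for T
    by (meson DERIV_isCont continuous_at_imp_continuous_on d1)
  have intb: "integral {a..b} s \<le> S" for a b
    unfolding S_def
    by (rule integral_subset_le) (auto intro: integrable_continuous_interval contS sint less_imp_le spos)
  have gs: "c = \<beta> / w \<and> (\<forall>x. s x = s \<mu> * exp (-((x-\<mu>)\<^sup>2)/(2*w)))"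
    by (rule ground_state[OF pos(1) w d1 d2 ode spos intb])
  have c: "c = \<beta> / w" using gs by blast
  have sf: "\<And>x. s x = s \<mu> * exp (-((x-\<mu>)\<^sup>2)/(2*w))" using gs by blast
  define C where "C = s \<mu>"
  have sC: "s = (\<lambda>x. C * exp (-((x-\<mu>)\<^sup>2)/(2*w)))"
  proof (rule ext)
    fix x show "s x = C * exp (-((x-\<mu>)\<^sup>2)/(2*w))" unfolding C_def by (rule sf)
  qed
  have hs: "(s has_integral C * sqrt (2*pi*w)) UNIV"
    unfolding sC by (rule has_integral_mult_right[OF gauss_int[OF w]])
  have SC: "S = C * sqrt (2*pi*w)" unfolding S_def using hs by (rule integral_unique)
  have sq: "sqrt (2*pi*w) > 0" using w by simp
  have C: "C = S * sqrt (1 / (2*pi*w))"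
    using SC sq w by (simp add: real_sqrt_divide field_simps)
  define D where "D = \<xi> + \<zeta> * ((1-\<mu>)\<^sup>2 + w)"
  have hb: "((\<lambda>x. b_fun \<xi> \<zeta> x * s x) has_integral C * (sqrt (2*pi*w) * D)) UNIV"
  proof -
    have "((\<lambda>x. C * ((\<xi> + \<zeta> * (1 - x)\<^sup>2) * exp (-((x-\<mu>)\<^sup>2)/(2*w)))) has_integral C * (sqrt (2*pi*w) * D)) UNIV"
      unfolding D_def by (rule has_integral_mult_right[OF gauss_int_b[OF w]])
    moreover have "(\<lambda>x. C * ((\<xi> + \<zeta> * (1 - x)\<^sup>2) * exp (-((x-\<mu>)\<^sup>2)/(2*w)))) = (\<lambda>x. b_fun \<xi> \<zeta> x * s x)"
      unfolding sC b_fun_def by (simp add: fun_eq_iff)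
    ultimately show ?thesis by simp
  qed
  have "integral UNIV (\<lambda>x. b_fun \<xi> \<zeta> x * s x) = \<nu>" using nu Ipos by simp
  then have SD: "S * D = \<nu>" using integral_unique[OF hb] SC by simp
  have Dpos: "D > 0" unfolding D_def using pos w by (simp add: add_pos_nonneg)
  have F: "F_fun \<beta> \<nu> \<eta> \<xi> \<zeta> I = S"
  proof -
    have "(\<zeta> * I / (\<eta> + \<zeta> * I) - 1)\<^sup>2 = (1 - \<mu>)\<^sup>2" unfolding \<mu>_def A_def by (simp add: power2_commute)
    then have "F_fun \<beta> \<nu> \<eta> \<xi> \<zeta> I = \<nu> / D"
      unfolding F_fun_def D_def w_def A_def by (simp add: algebra_simps)
    moreover have "\<nu> / D = S" unfolding SD[symmetric] using Dpos by simp
    ultimately show ?thesis by simp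
  qed
  have r: "\<beta> / w = sqrt \<beta> * sqrt A" unfolding w_def by (rule sqrt_div_id[OF pos(1) A])
  have dist: "(1/K + \<eta>*\<zeta>/A + \<xi>) * I = I/K + \<eta>*\<zeta>*I/A + \<xi>*I"
    by (simp add: algebra_simps)
  have SK: "S / K = \<gamma> - (1/K + \<eta>*\<zeta>/A + \<xi>) * I - sqrt \<beta> * sqrt A"
    using c r dist unfolding c_def by linarith
  have SE: "S = K * (\<gamma> - (1 / K + \<eta> * \<zeta> / A + \<xi>) * I - sqrt \<beta> * sqrt A)"
    using SK pos(2) by (simp add: divide_eq_eq mult.commute)
  have e3: "K * ((1/K + \<eta>*\<zeta>/A + \<xi>) * I) = I + K*(\<eta>*(\<zeta>*I/A)) + \<xi>*K*I"
    using pos(2) by (simp add: field_simps)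
  have SE': "S = K*\<gamma> - K*((1/K + \<eta>*\<zeta>/A + \<xi>) * I) - K*(sqrt \<beta> * sqrt A)"
    using SE by (simp add: right_diff_distrib)
  have eqn: "(1 + \<xi> * K) * I = K * (\<gamma> - \<eta> * (\<zeta> * I / A) - sqrt \<beta> * sqrt A) - S"
    unfolding distrib_right right_diff_distrib using SE' e3 by linarith
  have sform: "s = (\<lambda>x. S * sqrt (1 / (2*pi*w)) * exp (- (x - \<mu>)\<^sup>2 / (2 * w)))"
    unfolding sC C by simp
  show ?thesis
    using Ipos eqn sform F SE unfolding A_def w_def \<mu>_def by simp
qed

lemma backward:
  fixes \<beta> K \<nu> \<gamma> \<eta> \<xi> \<zeta> I :: real
  assumes pos: "\<beta> > 0" "K > 0" "\<nu> > 0" "\<eta> > 0" "\<xi> > 0" "\<zeta> > 0"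
    and Ipos: "I > 0"
    and eqn0: "(1 + \<xi> * K) * I = K * (\<gamma> - \<eta> * (\<zeta> * I / (\<eta> + \<zeta> * I))
                                - sqrt \<beta> * sqrt (\<eta> + \<zeta> * I)) - F_fun \<beta> \<nu> \<eta> \<xi> \<zeta> I"
  shows "K * (\<gamma> - (1 / K + \<eta> * \<zeta> / (\<eta> + \<zeta> * I) + \<xi>) * I - sqrt \<beta> * sqrt (\<eta> + \<zeta> * I)) > 0
     \<and> steady_state \<beta> K \<nu> \<gamma> \<eta> \<xi> \<zeta>
        (\<lambda>x. K * (\<gamma> - (1 / K + \<eta> * \<zeta> / (\<eta> + \<zeta> * I) + \<xi>) * I - sqrt \<beta> * sqrt (\<eta> + \<zeta> * I))
               * sqrt (1 / (2 * pi * sqrt (\<beta> / (\<eta> + \<zeta> * I))))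
               * exp (- (x - \<zeta> * I / (\<eta> + \<zeta> * I))\<^sup>2 / (2 * sqrt (\<beta> / (\<eta> + \<zeta> * I))))) I"
proof -
  define A where "A = \<eta> + \<zeta> * I"
  define \<mu> where "\<mu> = \<zeta> * I / A"
  define w where "w = sqrt (\<beta> / A)"
  define SE where "SE = K * (\<gamma> - (1 / K + \<eta> * \<zeta> / A + \<xi>) * I - sqrt \<beta> * sqrt A)"
  define D where "D = \<xi> + \<zeta> * ((1-\<mu>)\<^sup>2 + w)"
  have A: "A > 0" unfolding A_def using pos Ipos by (simp add: add_pos_pos)
  have w: "w > 0" unfolding w_def using pos A by simp
  have w2: "\<beta> / w\<^sup>2 = A" unfolding w_def using pos A by simp
  have Dpos: "D > 0" unfolding D_def using pos w by (simp add: add_pos_nonneg)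
  have F: "F_fun \<beta> \<nu> \<eta> \<xi> \<zeta> I = \<nu> / D"
  proof -
    have "(\<zeta> * I / (\<eta> + \<zeta> * I) - 1)\<^sup>2 = (1 - \<mu>)\<^sup>2" unfolding \<mu>_def A_def by (simp add: power2_commute)
    then show "F_fun \<beta> \<nu> \<eta> \<xi> \<zeta> I = \<nu> / D"
      unfolding F_fun_def D_def w_def A_def by (simp add: algebra_simps)
  qed
  have eqn: "(1 + \<xi> * K) * I = K * (\<gamma> - \<eta> * (\<zeta> * I / A) - sqrt \<beta> * sqrt A) - \<nu> / D"
    using eqn0 F unfolding A_def by simp
  have e3: "K * ((1/K + \<eta>*\<zeta>/A + \<xi>) * I) = I + K*(\<eta>*(\<zeta>*I/A)) + \<xi>*K*I"
    using pos(2) by (simp add: field_simps)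
  have SE': "SE = K*\<gamma> - K*((1/K + \<eta>*\<zeta>/A + \<xi>) * I) - K*(sqrt \<beta> * sqrt A)"
    unfolding SE_def by (simp add: right_diff_distrib)
  have SEF: "SE = \<nu> / D"
    using eqn SE' e3 unfolding distrib_right right_diff_distrib by linarith
  have SEpos: "SE > 0" unfolding SEF using pos Dpos by simp
  have SED: "SE * D = \<nu>" unfolding SEF using Dpos by simp
  have dist: "(1/K + \<eta>*\<zeta>/A + \<xi>) * I = I/K + \<eta>*\<zeta>*I/A + \<xi>*I"
    by (simp add: algebra_simps)
  have SK: "SE / K = \<gamma> - (1/K + \<eta>*\<zeta>/A + \<xi>) * I - sqrt \<beta> * sqrt A"
    unfolding SE_def using pos(2) by simp
  have r: "\<beta> / w = sqrt \<beta> * sqrt A" unfolding w_def by (rule sqrt_div_id[OF pos(1) A])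
  have cc: "\<gamma> - \<xi>*I - I/K - SE/K - \<eta>*\<zeta>*I/A = \<beta> / w"
    using SK dist r by linarith
  define k where "k = SE * sqrt (1 / (2*pi*w))"
  have kpos: "k > 0" unfolding k_def using SEpos w by simp
  have ksq: "k * sqrt (2*pi*w) = SE"
    unfolding k_def using w by (simp add: real_sqrt_divide)
  define sE where "sE = (\<lambda>x. k * exp (-((x-\<mu>)\<^sup>2)/(2*w)))"
  have wne: "w \<noteq> 0" using w by simp
  have d1: "(sE has_real_derivative k * (-(x-\<mu>)/w * exp (-((x-\<mu>)\<^sup>2)/(2*w)))) (at x)" for x
    unfolding sE_def by (rule DERIV_cmult[OF gauss_d1[OF wne]])
  have d2: "((\<lambda>x. k * (-(x-\<mu>)/w * exp (-((x-\<mu>)\<^sup>2)/(2*w)))) has_real_derivative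
             k * (((x-\<mu>)\<^sup>2/w\<^sup>2 - 1/w) * exp (-((x-\<mu>)\<^sup>2)/(2*w)))) (at x)" for x
    by (rule DERIV_cmult[OF gauss_d2[OF wne]])
  have hs: "(sE has_integral SE) UNIV"
    unfolding sE_def ksq[symmetric] by (rule has_integral_mult_right[OF gauss_int[OF w]])
  have intS: "integral UNIV sE = SE" using hs by (rule integral_unique)
  have hb: "((\<lambda>x. b_fun \<xi> \<zeta> x * sE x) has_integral \<nu>) UNIV"
  proof -
    have "((\<lambda>x. k * ((\<xi> + \<zeta> * (1 - x)\<^sup>2) * exp (-((x-\<mu>)\<^sup>2)/(2*w)))) has_integral k * (sqrt (2*pi*w) * D)) UNIV"
      unfolding D_def by (rule has_integral_mult_right[OF gauss_int_b[OF w]])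
    moreover have "(\<lambda>x. k * ((\<xi> + \<zeta> * (1 - x)\<^sup>2) * exp (-((x-\<mu>)\<^sup>2)/(2*w)))) = (\<lambda>x. b_fun \<xi> \<zeta> x * sE x)"
      unfolding sE_def b_fun_def by (simp add: fun_eq_iff)
    moreover have "k * (sqrt (2*pi*w) * D) = \<nu>" using ksq SED by (simp add: mult.assoc[symmetric])
    ultimately show ?thesis by simp
  qed
  have ode: "\<beta> * (k * (((x-\<mu>)\<^sup>2/w\<^sup>2 - 1/w) * exp (-((x-\<mu>)\<^sup>2)/(2*w))))
      + (a_fun \<gamma> \<eta> x - (b_fun \<xi> \<zeta> x + 1 / K) * I - integral UNIV sE / K) * sE x = 0" for x
  proof -
    let ?g = "exp (-((x-\<mu>)\<^sup>2)/(2*w))"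
    have X: "a_fun \<gamma> \<eta> x - (b_fun \<xi> \<zeta> x + 1 / K) * I - integral UNIV sE / K = \<beta> / w - A * (x - \<mu>)\<^sup>2"
    proof -
      have "a_fun \<gamma> \<eta> x - (b_fun \<xi> \<zeta> x + 1 / K) * I - SE / K
          = (\<gamma> - \<xi>*I - I/K - SE/K - \<eta>*\<zeta>*I/A) - A * (x - \<mu>)\<^sup>2"
        unfolding a_fun_def b_fun_def \<mu>_def by (rule alg_id) (use A A_def in auto)
      then show ?thesis unfolding intS cc .
    qed
    have Y: "\<beta> * ((x-\<mu>)\<^sup>2/w\<^sup>2 - 1/w) = A * (x - \<mu>)\<^sup>2 - \<beta> / w"
      unfolding w2[symmetric] by (simp add: algebra_simps)
    have "\<beta> * (k * (((x-\<mu>)\<^sup>2/w\<^sup>2 - 1/w) * ?g)) = k * ?g * (\<beta> * ((x-\<mu>)\<^sup>2/w\<^sup>2 - 1/w))"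
      by (simp add: algebra_simps)
    also have "\<dots> = k * ?g * (A * (x - \<mu>)\<^sup>2 - \<beta> / w)" unfolding Y ..
    finally have "\<beta> * (k * (((x-\<mu>)\<^sup>2/w\<^sup>2 - 1/w) * ?g)) = k * ?g * (A * (x - \<mu>)\<^sup>2 - \<beta> / w)" .
    moreover have "(\<beta> / w - A * (x - \<mu>)\<^sup>2) * sE x = - (k * ?g * (A * (x - \<mu>)\<^sup>2 - \<beta> / w))"
      unfolding sE_def by (simp add: algebra_simps)
    ultimately show ?thesis unfolding X by simp
  qed
  have ss: "steady_state \<beta> K \<nu> \<gamma> \<eta> \<xi> \<zeta> sE I"
    unfolding steady_state_def
  proof (intro conjI exI allI)
    fix x
    show "(sE has_real_derivative k * (-(x-\<mu>)/w * exp (-((x-\<mu>)\<^sup>2)/(2*w)))) (at x)" by (rule d1)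
    show "((\<lambda>x. k * (-(x-\<mu>)/w * exp (-((x-\<mu>)\<^sup>2)/(2*w)))) has_real_derivative
             k * (((x-\<mu>)\<^sup>2/w\<^sup>2 - 1/w) * exp (-((x-\<mu>)\<^sup>2)/(2*w)))) (at x)" by (rule d2)
    show "\<beta> * (k * (((x-\<mu>)\<^sup>2/w\<^sup>2 - 1/w) * exp (-((x-\<mu>)\<^sup>2)/(2*w))))
      + (a_fun \<gamma> \<eta> x - (b_fun \<xi> \<zeta> x + 1 / K) * I - integral UNIV sE / K) * sE x = 0" by (rule ode)
  next
    show "sE integrable_on UNIV" using hs by blast
    show "(\<lambda>x. b_fun \<xi> \<zeta> x * sE x) integrable_on UNIV" using hb by blast
    show "(integral UNIV (\<lambda>x. b_fun \<xi> \<zeta> x * sE x) - \<nu>) * I = 0" using integral_unique[OF hb] by simp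
    show "sE x > 0" for x unfolding sE_def using kpos by simp
    show "integral UNIV sE > 0" unfolding intS by (rule SEpos)
    show "I > 0" by (rule Ipos)
  qed
  have sEe: "sE = (\<lambda>x. K * (\<gamma> - (1 / K + \<eta> * \<zeta> / (\<eta> + \<zeta> * I) + \<xi>) * I - sqrt \<beta> * sqrt (\<eta> + \<zeta> * I))
               * sqrt (1 / (2 * pi * sqrt (\<beta> / (\<eta> + \<zeta> * I))))
               * exp (- (x - \<zeta> * I / (\<eta> + \<zeta> * I))\<^sup>2 / (2 * sqrt (\<beta> / (\<eta> + \<zeta> * I)))))"
    unfolding sE_def k_def SE_def A_def \<mu>_def w_def by simp
  have "K * (\<gamma> - (1 / K + \<eta> * \<zeta> / (\<eta> + \<zeta> * I) + \<xi>) * I - sqrt \<beta> * sqrt (\<eta> + \<zeta> * I)) > 0"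
    using SEpos unfolding SE_def A_def .
  with ss show ?thesis unfolding sEe by blast
qed

definition Gf :: "real \<Rightarrow> real \<Rightarrow> real \<Rightarrow> real \<Rightarrow> real \<Rightarrow> real \<Rightarrow> real \<Rightarrow> real \<Rightarrow> real" where
  "Gf \<beta> K \<nu> \<gamma> \<eta> \<xi> \<zeta> y = K * (\<gamma> - \<eta> * (\<zeta> * y / (\<eta> + \<zeta> * y)) - sqrt \<beta> * sqrt (\<eta> + \<zeta> * y))
      - F_fun \<beta> \<nu> \<eta> \<xi> \<zeta> y - (1 + \<xi> * K) * y"

lemma Fden_pos:
  fixes \<beta> \<eta> \<xi> \<zeta> y :: real
  assumes "\<beta> > 0" "\<eta> > 0" "\<xi> > 0" "\<zeta> > 0" "y \<ge> 0"
  shows "\<xi> + \<zeta> * (\<zeta> * y / (\<eta> + \<zeta> * y) - 1)\<^sup>2 + \<zeta> * sqrt (\<beta> / (\<eta> + \<zeta> * y)) > 0"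
proof -
  have "\<eta> + \<zeta> * y > 0" using assms by (simp add: add_pos_nonneg)
  then have "\<zeta> * sqrt (\<beta> / (\<eta> + \<zeta> * y)) \<ge> 0" using assms by simp
  moreover have "\<zeta> * (\<zeta> * y / (\<eta> + \<zeta> * y) - 1)\<^sup>2 \<ge> 0" using assms by simp
  ultimately show ?thesis using assms by linarith
qed

lemma F_nonneg:
  fixes \<beta> \<nu> \<eta> \<xi> \<zeta> y :: real
  assumes "\<beta> > 0" "\<nu> > 0" "\<eta> > 0" "\<xi> > 0" "\<zeta> > 0" "y \<ge> 0"
  shows "F_fun \<beta> \<nu> \<eta> \<xi> \<zeta> y > 0"
  unfolding F_fun_def using Fden_pos[of \<beta> \<eta> \<xi> \<zeta> y] assms by simp

lemma F_mono:
  fixes \<beta> \<nu> \<eta> \<xi> \<zeta> y1 y2 :: real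
  assumes pos: "\<beta> > 0" "\<nu> > 0" "\<eta> > 0" "\<xi> > 0" "\<zeta> > 0" and y: "0 \<le> y1" "y1 \<le> y2"
  shows "F_fun \<beta> \<nu> \<eta> \<xi> \<zeta> y1 \<le> F_fun \<beta> \<nu> \<eta> \<xi> \<zeta> y2"
proof -
  define A1 where "A1 = \<eta> + \<zeta> * y1"
  define A2 where "A2 = \<eta> + \<zeta> * y2"
  have A1: "A1 > 0" unfolding A1_def using pos y by (simp add: add_pos_nonneg)
  have A12: "A1 \<le> A2" unfolding A1_def A2_def using pos y by simp
  have A2: "A2 > 0" using A1 A12 by linarith
  have q: "\<zeta> * y / (\<eta> + \<zeta> * y) - 1 = - \<eta> / (\<eta> + \<zeta> * y)" if "\<eta> + \<zeta> * y > 0" for y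
    using that by (simp add: field_simps)
  have sq1: "(\<zeta> * y2 / (\<eta> + \<zeta> * y2) - 1)\<^sup>2 \<le> (\<zeta> * y1 / (\<eta> + \<zeta> * y1) - 1)\<^sup>2"
  proof -
    have "(\<eta> / A2)\<^sup>2 \<le> (\<eta> / A1)\<^sup>2"
      using A1 A12 pos by (intro power_mono divide_left_mono) (auto intro: mult_pos_pos)
    then show ?thesis using q[of y1] q[of y2] A1 A2 unfolding A1_def A2_def by (simp add: power2_eq_square)
  qed
  have sq2: "sqrt (\<beta> / A2) \<le> sqrt (\<beta> / A1)"
    using A1 A12 pos by (intro real_sqrt_le_mono divide_left_mono) (auto intro: mult_pos_pos)
  have "\<xi> + \<zeta> * (\<zeta> * y2 / (\<eta> + \<zeta> * y2) - 1)\<^sup>2 + \<zeta> * sqrt (\<beta> / (\<eta> + \<zeta> * y2))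
     \<le> \<xi> + \<zeta> * (\<zeta> * y1 / (\<eta> + \<zeta> * y1) - 1)\<^sup>2 + \<zeta> * sqrt (\<beta> / (\<eta> + \<zeta> * y1))"
    using sq1 sq2 pos unfolding A1_def A2_def by (intro add_mono mult_left_mono) auto
  moreover have "\<xi> + \<zeta> * (\<zeta> * y2 / (\<eta> + \<zeta> * y2) - 1)\<^sup>2 + \<zeta> * sqrt (\<beta> / (\<eta> + \<zeta> * y2)) > 0"
    using Fden_pos[of \<beta> \<eta> \<xi> \<zeta> y2] pos y by simp
  moreover have "\<xi> + \<zeta> * (\<zeta> * y1 / (\<eta> + \<zeta> * y1) - 1)\<^sup>2 + \<zeta> * sqrt (\<beta> / (\<eta> + \<zeta> * y1)) > 0"
    using Fden_pos[of \<beta> \<eta> \<xi> \<zeta> y1] pos y by simp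
  ultimately show ?thesis unfolding F_fun_def using pos
    by (intro divide_left_mono) (auto intro: mult_pos_pos)
qed

lemma G_strict:
  fixes \<beta> K \<nu> \<gamma> \<eta> \<xi> \<zeta> y1 y2 :: real
  assumes pos: "\<beta> > 0" "K > 0" "\<nu> > 0" "\<eta> > 0" "\<xi> > 0" "\<zeta> > 0" and y: "0 \<le> y1" "y1 < y2"
  shows "Gf \<beta> K \<nu> \<gamma> \<eta> \<xi> \<zeta> y2 < Gf \<beta> K \<nu> \<gamma> \<eta> \<xi> \<zeta> y1"
proof -
  have A1: "\<eta> + \<zeta> * y1 > 0" using pos y by (simp add: add_pos_nonneg)
  have A2: "\<eta> + \<zeta> * y2 > 0" using pos y by (simp add: add_pos_nonneg)
  have q: "\<zeta> * y1 / (\<eta> + \<zeta> * y1) \<le> \<zeta> * y2 / (\<eta> + \<zeta> * y2)"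
  proof -
    have "\<zeta> * \<eta> * y1 \<le> \<zeta> * \<eta> * y2" using pos y by simp
    then have "\<zeta> * y1 * (\<eta> + \<zeta> * y2) \<le> \<zeta> * y2 * (\<eta> + \<zeta> * y1)" by (simp add: algebra_simps)
    then show ?thesis using A1 A2 by (simp add: divide_simps)
  qed
  have r: "sqrt (\<eta> + \<zeta> * y1) \<le> sqrt (\<eta> + \<zeta> * y2)" using pos y by simp
  have "K * (\<gamma> - \<eta> * (\<zeta> * y2 / (\<eta> + \<zeta> * y2)) - sqrt \<beta> * sqrt (\<eta> + \<zeta> * y2))
      \<le> K * (\<gamma> - \<eta> * (\<zeta> * y1 / (\<eta> + \<zeta> * y1)) - sqrt \<beta> * sqrt (\<eta> + \<zeta> * y1))"
  proof (rule mult_left_mono)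
    have "\<eta> * (\<zeta> * y1 / (\<eta> + \<zeta> * y1)) \<le> \<eta> * (\<zeta> * y2 / (\<eta> + \<zeta> * y2))"
      using q pos by (intro mult_left_mono) auto
    moreover have "sqrt \<beta> * sqrt (\<eta> + \<zeta> * y1) \<le> sqrt \<beta> * sqrt (\<eta> + \<zeta> * y2)"
      using r pos by (intro mult_left_mono) auto
    ultimately show "\<gamma> - \<eta> * (\<zeta> * y2 / (\<eta> + \<zeta> * y2)) - sqrt \<beta> * sqrt (\<eta> + \<zeta> * y2)
      \<le> \<gamma> - \<eta> * (\<zeta> * y1 / (\<eta> + \<zeta> * y1)) - sqrt \<beta> * sqrt (\<eta> + \<zeta> * y1)" by linarith
  qed (use pos in simp)
  moreover have "F_fun \<beta> \<nu> \<eta> \<xi> \<zeta> y1 \<le> F_fun \<beta> \<nu> \<eta> \<xi> \<zeta> y2"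
    using F_mono[of \<beta> \<nu> \<eta> \<xi> \<zeta> y1 y2] pos y by simp
  moreover have "(1 + \<xi> * K) * y1 < (1 + \<xi> * K) * y2"
    using pos y by (intro mult_strict_left_mono) (auto intro: add_pos_pos)
  ultimately show ?thesis unfolding Gf_def by linarith
qed

lemma G_cont:
  fixes \<beta> K \<nu> \<gamma> \<eta> \<xi> \<zeta> y :: real
  assumes pos: "\<beta> > 0" "K > 0" "\<nu> > 0" "\<eta> > 0" "\<xi> > 0" "\<zeta> > 0" and y: "0 \<le> y"
  shows "isCont (Gf \<beta> K \<nu> \<gamma> \<eta> \<xi> \<zeta>) y"
proof -
  have A: "\<eta> + \<zeta> * y \<noteq> 0" using pos y by (smt (verit) mult_nonneg_nonneg)
  have D: "\<xi> + \<zeta> * (\<zeta> * y / (\<eta> + \<zeta> * y) - 1)\<^sup>2 + \<zeta> * sqrt (\<beta> / (\<eta> + \<zeta> * y)) \<noteq> 0"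
    using Fden_pos[of \<beta> \<eta> \<xi> \<zeta> y] pos y by simp
  show ?thesis
    unfolding Gf_def[abs_def] F_fun_def
    by (intro continuous_intros A D)
qed

lemma G_bound:
  fixes \<beta> K \<nu> \<gamma> \<eta> \<xi> \<zeta> y :: real
  assumes pos: "\<beta> > 0" "K > 0" "\<nu> > 0" "\<eta> > 0" "\<xi> > 0" "\<zeta> > 0" and y: "0 \<le> y"
  shows "Gf \<beta> K \<nu> \<gamma> \<eta> \<xi> \<zeta> y \<le> K * \<gamma> - (1 + \<xi> * K) * y"
proof -
  have "\<eta> * (\<zeta> * y / (\<eta> + \<zeta> * y)) \<ge> 0" using pos y by simp
  moreover have "sqrt \<beta> * sqrt (\<eta> + \<zeta> * y) \<ge> 0" using pos y by simp
  ultimately have "0 \<le> K * (\<eta> * (\<zeta> * y / (\<eta> + \<zeta> * y)) + sqrt \<beta> * sqrt (\<eta> + \<zeta> * y))"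
    using pos by (intro mult_nonneg_nonneg) auto
  then have "K * (\<gamma> - \<eta> * (\<zeta> * y / (\<eta> + \<zeta> * y)) - sqrt \<beta> * sqrt (\<eta> + \<zeta> * y)) \<le> K * \<gamma>"
    unfolding right_diff_distrib distrib_left by linarith
  moreover have "F_fun \<beta> \<nu> \<eta> \<xi> \<zeta> y > 0" using F_nonneg[of \<beta> \<nu> \<eta> \<xi> \<zeta> y] pos y by simp
  ultimately show ?thesis unfolding Gf_def by linarith
qed

lemma G_zero:
  fixes \<beta> K \<nu> \<gamma> \<eta> \<xi> \<zeta> :: real
  assumes pos: "\<beta> > 0" "K > 0" "\<nu> > 0" "\<eta> > 0" "\<xi> > 0" "\<zeta> > 0"
    and R: "R0 \<beta> K \<nu> \<gamma> \<eta> \<xi> \<zeta> > 1"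
  shows "Gf \<beta> K \<nu> \<gamma> \<eta> \<xi> \<zeta> 0 > 0"
proof -
  define D0 where "D0 = \<xi> + \<zeta> + \<zeta> * sqrt (\<beta> / \<eta>)"
  have D0: "D0 > 0" unfolding D0_def using pos by (simp add: add_pos_nonneg)
  have "K / \<nu> * (\<gamma> - sqrt (\<eta> * \<beta>)) * D0 > 1" using R unfolding R0_def D0_def .
  then have "K * (\<gamma> - sqrt (\<eta> * \<beta>)) * D0 > \<nu>" using pos by (simp add: field_simps)
  then have "K * (\<gamma> - sqrt (\<eta> * \<beta>)) > \<nu> / D0" using D0 by (simp add: field_simps)
  moreover have "F_fun \<beta> \<nu> \<eta> \<xi> \<zeta> 0 = \<nu> / D0" unfolding F_fun_def D0_def by simp
  moreover have "sqrt (\<eta> * \<beta>) = sqrt \<beta> * sqrt \<eta>" by (simp add: real_sqrt_mult)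
  ultimately show ?thesis unfolding Gf_def by simp
qed

lemma eqn_iff:
  "((1 + \<xi> * K) * y = K * (\<gamma> - \<eta> * (\<zeta> * y / (\<eta> + \<zeta> * y)) - sqrt \<beta> * sqrt (\<eta> + \<zeta> * y)) - F_fun \<beta> \<nu> \<eta> \<xi> \<zeta> y)
   \<longleftrightarrow> Gf \<beta> K \<nu> \<gamma> \<eta> \<xi> \<zeta> y = 0"
  unfolding Gf_def by linarith

theorem proposition2:
  fixes \<beta> K \<nu> \<gamma> \<eta> \<xi> \<zeta> :: real
  assumes "\<beta> > 0" "K > 0" "\<nu> > 0" "\<gamma> > 0" "\<eta> > 0" "\<xi> > 0" "\<zeta> > 0"
    and "\<gamma> > \<eta>"
    and "\<gamma> > sqrt (\<eta> * \<beta>)"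
    and "R0 \<beta> K \<nu> \<gamma> \<eta> \<xi> \<zeta> > 1"
  shows "\<exists>IE::real. IE > 0
    \<and> (1 + \<xi> * K) * IE = K * (\<gamma> - \<eta> * (\<zeta> * IE / (\<eta> + \<zeta> * IE))
                                - sqrt \<beta> * sqrt (\<eta> + \<zeta> * IE)) - F_fun \<beta> \<nu> \<eta> \<xi> \<zeta> IE
    \<and> (\<forall>y::real. y > 0 \<and>
         (1 + \<xi> * K) * y = K * (\<gamma> - \<eta> * (\<zeta> * y / (\<eta> + \<zeta> * y))
                                - sqrt \<beta> * sqrt (\<eta> + \<zeta> * y)) - F_fun \<beta> \<nu> \<eta> \<xi> \<zeta> y
         \<longrightarrow> y = IE)
    \<and> (let \<sigma>2 = sqrt (\<beta> / (\<eta> + \<zeta> * IE));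
           \<mu> = \<zeta> * IE / (\<eta> + \<zeta> * IE);
           SE = K * (\<gamma> - (1 / K + \<eta> * \<zeta> / (\<eta> + \<zeta> * IE) + \<xi>) * IE
                     - sqrt \<beta> * sqrt (\<eta> + \<zeta> * IE));
           sE = (\<lambda>x. SE * sqrt (1 / (2 * pi * \<sigma>2)) * exp (- (x - \<mu>)\<^sup>2 / (2 * \<sigma>2)))
       in SE > 0
          \<and> (\<forall>s I. steady_state \<beta> K \<nu> \<gamma> \<eta> \<xi> \<zeta> s I \<longleftrightarrow> (s = sE \<and> I = IE)))"
proof -
  note pos = assms(1,2,3,5,6,7)
  let ?G = "Gf \<beta> K \<nu> \<gamma> \<eta> \<xi> \<zeta>"
  have G0: "?G 0 > 0" by (rule G_zero[OF pos assms(10)])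
  have Kg: "K * \<gamma> > 0" using assms by simp
  have Gb: "?G (K * \<gamma>) < 0"
  proof -
    have "?G (K * \<gamma>) \<le> K * \<gamma> - (1 + \<xi> * K) * (K * \<gamma>)" by (rule G_bound[OF pos]) (use Kg in simp)
    also have "\<dots> = - (\<xi> * K * (K * \<gamma>))" by (simp add: algebra_simps)
    also have "\<dots> < 0" using assms Kg by simp
    finally show ?thesis .
  qed
  obtain IE where IE0: "0 \<le> IE" "IE \<le> K * \<gamma>" and GIE: "?G IE = 0"
    using IVT2[of ?G "K * \<gamma>" 0 0] Gb G0 Kg G_cont[OF pos] by force
  have IEpos: "IE > 0" using IE0 GIE G0 by (cases "IE = 0") auto
  have uniq: "y = IE" if "y > 0" "?G y = 0" for y
  proof (rule ccontr)
    assume "y \<noteq> IE"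
    then consider "y < IE" | "IE < y" by linarith
    then show False
    proof cases
      case 1 then show False using G_strict[of \<beta> K \<nu> \<eta> \<xi> \<zeta> y IE \<gamma>, OF pos] that GIE by simp
    next
      case 2 then show False using G_strict[of \<beta> K \<nu> \<eta> \<xi> \<zeta> IE y \<gamma>, OF pos] that GIE IE0 by simp
    qed
  qed
  have eqnIE: "(1 + \<xi> * K) * IE = K * (\<gamma> - \<eta> * (\<zeta> * IE / (\<eta> + \<zeta> * IE))
                                - sqrt \<beta> * sqrt (\<eta> + \<zeta> * IE)) - F_fun \<beta> \<nu> \<eta> \<xi> \<zeta> IE"
    using GIE eqn_iff by blast
  show ?thesis
  proof (intro exI[of _ IE] conjI allI impI)
    show "IE > 0" by (rule IEpos)
    show "(1 + \<xi> * K) * IE = K * (\<gamma> - \<eta> * (\<zeta> * IE / (\<eta> + \<zeta> * IE))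
                                - sqrt \<beta> * sqrt (\<eta> + \<zeta> * IE)) - F_fun \<beta> \<nu> \<eta> \<xi> \<zeta> IE" by (rule eqnIE)
  next
    fix y assume "y > 0 \<and> (1 + \<xi> * K) * y = K * (\<gamma> - \<eta> * (\<zeta> * y / (\<eta> + \<zeta> * y))
                                - sqrt \<beta> * sqrt (\<eta> + \<zeta> * y)) - F_fun \<beta> \<nu> \<eta> \<xi> \<zeta> y"
    then show "y = IE" using uniq eqn_iff by blast
  next
    show "let \<sigma>2 = sqrt (\<beta> / (\<eta> + \<zeta> * IE));
           \<mu> = \<zeta> * IE / (\<eta> + \<zeta> * IE);
           SE = K * (\<gamma> - (1 / K + \<eta> * \<zeta> / (\<eta> + \<zeta> * IE) + \<xi>) * IE
                     - sqrt \<beta> * sqrt (\<eta> + \<zeta> * IE));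
           sE = (\<lambda>x. SE * sqrt (1 / (2 * pi * \<sigma>2)) * exp (- (x - \<mu>)\<^sup>2 / (2 * \<sigma>2)))
       in SE > 0
          \<and> (\<forall>s I. steady_state \<beta> K \<nu> \<gamma> \<eta> \<xi> \<zeta> s I \<longleftrightarrow> (s = sE \<and> I = IE))"
      unfolding Let_def
    proof (intro conjI allI)
      show "K * (\<gamma> - (1 / K + \<eta> * \<zeta> / (\<eta> + \<zeta> * IE) + \<xi>) * IE - sqrt \<beta> * sqrt (\<eta> + \<zeta> * IE)) > 0"
        using backward[OF pos IEpos eqnIE] by blast
    next
      fix s I
      show "steady_state \<beta> K \<nu> \<gamma> \<eta> \<xi> \<zeta> s I \<longleftrightarrow> (s = (\<lambda>x. K * (\<gamma> - (1 / K + \<eta> * \<zeta> / (\<eta> + \<zeta> * IE) + \<xi>) * IE - sqrt \<beta> * sqrt (\<eta> + \<zeta> * IE))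
               * sqrt (1 / (2 * pi * sqrt (\<beta> / (\<eta> + \<zeta> * IE))))
               * exp (- (x - \<zeta> * IE / (\<eta> + \<zeta> * IE))\<^sup>2 / (2 * sqrt (\<beta> / (\<eta> + \<zeta> * IE))))) \<and> I = IE)"
      proof
        assume ss: "steady_state \<beta> K \<nu> \<gamma> \<eta> \<xi> \<zeta> s I"
        note fw = forward[OF pos ss]
        have I: "I = IE" using fw uniq eqn_iff by blast
        show "s = (\<lambda>x. K * (\<gamma> - (1 / K + \<eta> * \<zeta> / (\<eta> + \<zeta> * IE) + \<xi>) * IE - sqrt \<beta> * sqrt (\<eta> + \<zeta> * IE))
               * sqrt (1 / (2 * pi * sqrt (\<beta> / (\<eta> + \<zeta> * IE))))
               * exp (- (x - \<zeta> * IE / (\<eta> + \<zeta> * IE))\<^sup>2 / (2 * sqrt (\<beta> / (\<eta> + \<zeta> * IE))))) \<and> I = IE"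
          using fw unfolding I by blast
      next
        assume h: "s = (\<lambda>x. K * (\<gamma> - (1 / K + \<eta> * \<zeta> / (\<eta> + \<zeta> * IE) + \<xi>) * IE - sqrt \<beta> * sqrt (\<eta> + \<zeta> * IE))
               * sqrt (1 / (2 * pi * sqrt (\<beta> / (\<eta> + \<zeta> * IE))))
               * exp (- (x - \<zeta> * IE / (\<eta> + \<zeta> * IE))\<^sup>2 / (2 * sqrt (\<beta> / (\<eta> + \<zeta> * IE))))) \<and> I = IE"
        then show "steady_state \<beta> K \<nu> \<gamma> \<eta> \<xi> \<zeta> s I"
          using backward[OF pos IEpos eqnIE] by blast
      qed
    qed
  qed
qed

end
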